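(* Let $\hat{\mathbb{N}}=\{n\in\mathbb{N}: n\ge 3\}$, let $n \in \hat{\mathbb{N}}$ and $M \subseteq \hat{\mathbb{N}} \setminus \{n\}$. Then $\mathrm{pPol}\, R^{\Lambda}_n \not\supseteq \bigcap_{m \in M} \mathrm{pPol}\, R^{\Lambda}_m$.
   Context: Partial functions are on $\{0,1\}$: an $n$-ary partial function is a map $f:\operatorname{dom} f\to\{0,1\}$ with $\operatorname{dom} f\subseteq\{0,1\}^n$; an empty intersection of sets of partial functions is understood as the set of all partial functions. For $\rho\subseteq\{0,1\}^h$, $\mathrm{pPol}\,\rho$ is the set of partial functions $f$ such that for every $h\times n$ matrix whose rows lie in $\operatorname{dom} f$ and whose columns lie in $\rho$, the column obtained by applying $f$ row-wise lies in $\rho$. For $m\ge3$, $R^{\Lambda}_m\subseteq\{0,1\}^{m+1}$ is the set of tuples $(x_1,\dots,x_{m+1})$ satisfying $x_1\lor\lnot x_2\lor\cdots\lor\lnot x_{m+1}$ and, for all pairwise distinct $i,j_1,j_2\in\{2,\dots,m+1\}$, $x_i\lor\lnot x_1\lor\lnot x_{j_1}\lor\lnot x_{j_2}$. *)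

theory Defs
  imports Main
begin

text \<open>Tuples in {0,1}^h are boolean lists of length h (False = 0, True = 1).\<close>

type_synonym pfun = "nat \<times> (bool list \<Rightarrow> bool option)"

definition is_pfun :: "pfun \<Rightarrow> bool" where
  "is_pfun p \<longleftrightarrow> fst p \<ge> 1 \<and> (\<forall>x. snd p x \<noteq> None \<longrightarrow> length x = fst p)"

definition all_pfuns :: "pfun set" where
  "all_pfuns = {p. is_pfun p}"

text \<open>pPol of an h-ary relation rho. A matrix with h rows and n columns is given
  by its rows X 0, ..., X (h-1); column j is [X 0 ! j, ..., X (h-1) ! j].\<close>

definition pPol :: "nat \<Rightarrow> bool list set \<Rightarrow> pfun set" where
  "pPol h rho = {p. is_pfun p \<and>
     (\<forall>X :: nat \<Rightarrow> bool list.
        (\<forall>i<h. snd p (X i) \<noteq> None) \<longrightarrow>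
        (\<forall>j<fst p. map (\<lambda>i. X i ! j) [0..<h] \<in> rho) \<longrightarrow>
        map (\<lambda>i. the (snd p (X i))) [0..<h] \<in> rho)}"

text \<open>R^Lambda_m as a set of lists of length m+1; x_k corresponds to x ! (k-1).\<close>

definition RLam :: "nat \<Rightarrow> bool list set" where
  "RLam m = {x. length x = m + 1 \<and>
     (x ! 0 \<or> (\<exists>k\<in>{1..m}. \<not> x ! k)) \<and>
     (\<forall>i\<in>{1..m}. \<forall>j1\<in>{1..m}. \<forall>j2\<in>{1..m}.
        i \<noteq> j1 \<and> i \<noteq> j2 \<and> j1 \<noteq> j2 \<longrightarrow>
        x ! i \<or> \<not> x ! 0 \<or> \<not> x ! j1 \<or> \<not> x ! j2)}"

definition Nhat :: "nat set" where
  "Nhat = {n. n \<ge> 3}"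

end

theory Submission imports Defs begin

lemma comb:
  fixes n m :: nat and Z :: "nat \<Rightarrow> bool" and g :: "nat \<Rightarrow> nat" and E :: "nat \<Rightarrow> nat \<Rightarrow> bool"
  assumes n3: "n \<ge> 3" and m3: "m \<ge> 3" and mn: "m \<noteq> n"
    and g: "\<And>k. k \<le> m \<Longrightarrow> \<not> Z k \<Longrightarrow> g k < n"
    and E: "\<And>k c. E k c = (if Z k then c < n else if c < n then c = g k else c - n \<noteq> g k)"
    and P1: "\<And>c. c < 2*n \<Longrightarrow> E 0 c \<or> (\<exists>k\<in>{1..m}. \<not> E k c)"
    and P2: "\<And>c i a b. c < 2*n \<Longrightarrow> i\<in>{1..m} \<Longrightarrow> a\<in>{1..m} \<Longrightarrow> b\<in>{1..m} \<Longrightarrow>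
               i \<noteq> a \<Longrightarrow> i \<noteq> b \<Longrightarrow> a \<noteq> b \<Longrightarrow> E i c \<or> \<not> E 0 c \<or> \<not> E a c \<or> \<not> E b c"
  shows "(\<not> Z 0 \<or> (\<exists>k\<in>{1..m}. Z k)) \<and>
         (\<forall>i\<in>{1..m}. \<forall>a\<in>{1..m}. \<forall>b\<in>{1..m}. i \<noteq> a \<and> i \<noteq> b \<and> a \<noteq> b \<longrightarrow> \<not> Z i \<or> Z 0 \<or> Z a \<or> Z b)"
proof -
  have A: "\<not> Z 0 \<or> (\<exists>k\<in>{1..m}. Z k)"
  proof (rule ccontr)
    assume "\<not> (\<not> Z 0 \<or> (\<exists>k\<in>{1..m}. Z k))"
    hence Z0: "Z 0" and nZ: "\<And>k. k\<in>{1..m} \<Longrightarrow> \<not> Z k" by auto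
    have sur: "\<exists>k\<in>{1..m}. g k = l" if "l < n" for l
    proof -
      from P1[of "n+l"] that obtain k where "k\<in>{1..m}" "\<not> E k (n+l)"
        using Z0 E by auto
      thus ?thesis using nZ[of k] E by auto
    qed
    have inj: "inj_on g {1..m}"
    proof (rule inj_onI, rule ccontr)
      fix a b assume ab: "a \<in> {1..m}" "b \<in> {1..m}" "g a = g b" "a \<noteq> b"
      define c0 where "c0 = g a"
      have c0n: "c0 < n" using g[of a] nZ[of a] ab c0_def by auto
      define l where "l = (if c0 = 0 then 1 else 0::nat)"
      have "l < n" "l \<noteq> c0" using n3 l_def by auto
      then obtain k where k: "k\<in>{1..m}" "g k = l" using sur by blast
      have "k \<noteq> a" "k \<noteq> b" using k ab c0_def \<open>l \<noteq> c0\<close> by auto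
      from P2[of c0 k a b] k ab c0n n3 have "E k c0 \<or> \<not> E 0 c0 \<or> \<not> E a c0 \<or> \<not> E b c0"
        using \<open>k \<noteq> a\<close> \<open>k \<noteq> b\<close> by auto
      thus False using E Z0 nZ k ab c0n c0_def \<open>l \<noteq> c0\<close> by auto
    qed
    have img: "g ` {1..m} = {0..<n}"
    proof
      show "g ` {1..m} \<subseteq> {0..<n}" using g nZ by auto
      show "{0..<n} \<subseteq> g ` {1..m}" using sur by fastforce
    qed
    have "card (g ` {1..m}) = m" using card_image[OF inj] by simp
    with img show False using mn by simp
  qed
  have B: "\<not> Z i \<or> Z 0 \<or> Z a \<or> Z b" if ia: "i\<in>{1..m}" "a\<in>{1..m}" "b\<in>{1..m}" and d: "i \<noteq> a \<and> i \<noteq> b \<and> a \<noteq> b" for i a b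
  proof -
    show "\<not> Z i \<or> Z 0 \<or> Z a \<or> Z b"
    proof (rule ccontr)
      assume "\<not> (\<not> Z i \<or> Z 0 \<or> Z a \<or> Z b)"
      hence Zi: "Z i" and nZ0: "\<not> Z 0" and nZa: "\<not> Z a" and nZb: "\<not> Z b" by auto
      define j where "j = g 0"
      have jn: "j < n" using g[of 0] nZ0 j_def by auto
      have C: "l = g x \<or> l = g y" if "l < n" "l \<noteq> j" "x\<in>{1..m}" "y\<in>{1..m}" "x \<noteq> i" "y \<noteq> i" "x \<noteq> y"
          "\<not> Z x" "\<not> Z y" for l x y
      proof -
        from P2[of "n+l" i x y] that ia have "E i (n+l) \<or> \<not> E 0 (n+l) \<or> \<not> E x (n+l) \<or> \<not> E y (n+l)" by auto
        thus ?thesis using E Zi nZ0 that j_def by auto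
      qed
      have sub: "{0..<n} - {j} \<subseteq> {g a, g b}" proof
        fix l assume "l \<in> {0..<n} - {j}"
        thus "l \<in> {g a, g b}" using C[of l a b] ia d nZa nZb by auto
      qed
      have "card ({0..<n} - {j}) \<le> card {g a, g b}" by (rule card_mono[OF _ sub]) simp
      also have "\<dots> \<le> 2" by (simp add: card_insert_if)
      finally have "n - 1 \<le> 2" using jn by simp
      hence n3': "n = 3" using n3 by simp
      hence m4: "m \<ge> 4" using m3 mn by simp
      have "card {i,a,b} \<le> 3" by (simp add: card_insert_if)
      hence "\<not> {1..m} \<subseteq> {i,a,b}" using m4 card_mono[of "{i,a,b}" "{1..m}"] by fastforce
      then obtain k where k: "k\<in>{1..m}" "k \<noteq> i" "k \<noteq> a" "k \<noteq> b" by blast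
      obtain s t where st: "s < n" "t < n" "s \<noteq> j" "t \<noteq> j" "s \<noteq> t"
        using n3' jn by (metis less_numeral_extra(1) less_one nat_neq_iff numeral_3_eq_3 numeral_2_eq_2 less_Suc_eq zero_less_numeral)
      have sa: "s = g a \<or> s = g b" "t = g a \<or> t = g b" using sub st by auto
      show False
      proof (cases "Z k")
        case True
        from P2[of j a i k] jn n3 ia k d have "E a j \<or> \<not> E 0 j \<or> \<not> E i j \<or> \<not> E k j" by auto
        hence "g a = j" using E True Zi nZ0 nZa jn j_def by auto
        thus False using sa st by auto
      next
        case False
        have "s = g a \<or> s = g k" "t = g a \<or> t = g k" "s = g b \<or> s = g k" "t = g b \<or> t = g k"
          using C[of s a k] C[of t a k] C[of s b k] C[of t b k] st ia k d nZa nZb False by auto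
        thus False using sa st by metis
      qed
    qed
  qed
  show ?thesis using A B by blast
qed

definition u0 :: "nat \<Rightarrow> bool list" where "u0 n = map (\<lambda>c. c < n) [0..<2*n]"
definition vv :: "nat \<Rightarrow> nat \<Rightarrow> bool list" where
  "vv n i = map (\<lambda>c. if c < n then c = i else c - n \<noteq> i) [0..<2*n]"
definition ff :: "nat \<Rightarrow> pfun" where
  "ff n = (2*n, \<lambda>x. if x = u0 n then Some False else if (\<exists>i<n. x = vv n i) then Some True else None)"

lemma u0_nth: "c < 2*n \<Longrightarrow> u0 n ! c = (c < n)" by (simp add: u0_def)
lemma vv_nth: "c < 2*n \<Longrightarrow> vv n i ! c = (if c < n then c = i else c - n \<noteq> i)" by (simp add: vv_def)

lemma u0_ne_vv: assumes "n \<ge> 2" "i < n" shows "u0 n \<noteq> vv n i"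
proof
  assume h: "u0 n = vv n i"
  define i' where "i' = (if i = 0 then 1 else 0::nat)"
  have "i' < n" "i' \<noteq> i" using assms i'_def by auto
  hence "u0 n ! (n + i') \<noteq> vv n i ! (n + i')" by (simp add: u0_nth vv_nth)
  thus False using h by simp
qed

lemma ff_pfun: "n \<ge> 1 \<Longrightarrow> is_pfun (ff n)"
  by (auto simp: is_pfun_def ff_def u0_def vv_def split: if_splits)

lemma ff_not: assumes n3: "n \<ge> 3" shows "ff n \<notin> pPol (n+1) (RLam n)"
proof
  assume h: "ff n \<in> pPol (n+1) (RLam n)"
  define X where "X = (\<lambda>k. if k = 0 then u0 n else vv n (k - 1))"
  have dom: "snd (ff n) (X i) \<noteq> None" if "i < n+1" for i
  proof (cases "i = 0")
    case False
    hence "i - 1 < n" using that by simp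
    hence "\<exists>i'<n. vv n (i-1) = vv n i'" by blast
    thus ?thesis using False by (auto simp add: X_def ff_def)
  qed (simp add: X_def ff_def)
  have val: "the (snd (ff n) (X i)) = (i \<noteq> 0)" if "i < n+1" for i
  proof (cases "i = 0")
    case False
    hence "i - 1 < n" using that by simp
    hence "\<exists>i'<n. vv n (i-1) = vv n i'" "vv n (i-1) \<noteq> u0 n" using u0_ne_vv[of n "i - 1"] n3 by auto
    thus ?thesis using False by (auto simp add: X_def ff_def)
  qed (simp add: X_def ff_def)
  have col: "map (\<lambda>i. X i ! j) [0..<n+1] \<in> RLam n" if "j < fst (ff n)" for j
  proof -
    have j: "j < 2*n" using that by (simp add: ff_def)
    have ent: "map (\<lambda>i. X i ! j) [0..<n+1] ! k = (if k = 0 then j < n else if j < n then j = k - 1 else j - n \<noteq> k - 1)"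
      if "k \<le> n" for k using that j by (simp add: X_def u0_nth vv_nth nth_append del: upt_Suc)
    show ?thesis
    proof (cases "j < n")
      case True
      thus ?thesis unfolding RLam_def using ent by auto
    next
      case False
      hence "\<not> map (\<lambda>i. X i ! j) [0..<n+1] ! (j - n + 1)" using ent[of "j-n+1"] j by auto
      moreover have "j - n + 1 \<in> {1..n}" using j False by auto
      ultimately have "\<exists>k\<in>{1..n}. \<not> map (\<lambda>i. X i ! j) [0..<n+1] ! k" by blast
      moreover have "\<not> map (\<lambda>i. X i ! j) [0..<n+1] ! 0" using ent[of 0] False by simp
      ultimately show ?thesis unfolding RLam_def by (simp del: upt_Suc)
    qed
  qed
  have "map (\<lambda>i. the (snd (ff n) (X i))) [0..<n+1] \<in> RLam n"
    using h dom col unfolding pPol_def by blast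
  moreover have "map (\<lambda>i. the (snd (ff n) (X i))) [0..<n+1] ! k = (k \<noteq> 0)" if "k \<le> n" for k
    using that val by (simp del: upt_Suc)
  ultimately show False unfolding RLam_def by auto
qed


lemma ff_in: assumes n3: "n \<ge> 3" and m3: "m \<ge> 3" and mn: "m \<noteq> n"
  shows "ff n \<in> pPol (m+1) (RLam m)"
  unfolding pPol_def
proof (intro CollectI conjI allI impI)
  show "is_pfun (ff n)" using ff_pfun n3 by simp
  fix X :: "nat \<Rightarrow> bool list"
  assume dom: "\<forall>i<m+1. snd (ff n) (X i) \<noteq> None"
    and col: "\<forall>j<fst (ff n). map (\<lambda>i. X i ! j) [0..<m+1] \<in> RLam m"
  define Z where "Z k = (X k = u0 n)" for k
  define g where "g k = (SOME i. i < n \<and> X k = vv n i)" for k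
  have gk: "g k < n \<and> X k = vv n (g k)" if "k \<le> m" "\<not> Z k" for k
  proof -
    have "\<exists>i. i < n \<and> X k = vv n i" using dom[rule_format, of k] that
      by (auto simp: ff_def Z_def split: if_splits)
    thus ?thesis unfolding g_def by (rule someI_ex)
  qed
  define E where "E k c = (if Z k then c < n else if c < n then c = g k else c - n \<noteq> g k)" for k c
  have EX: "E k c = X k ! c" if "k \<le> m" "c < 2*n" for k c
  proof (cases "Z k")
    case True thus ?thesis using that by (simp add: E_def Z_def u0_nth)
  next
    case False thus ?thesis using that gk[OF that(1) False] by (simp add: E_def vv_nth)
  qed
  have colent: "map (\<lambda>i. X i ! c) [0..<m+1] ! k = E k c" if "k \<le> m" "c < 2*n" for k c
    using that EX by (simp del: upt_Suc add: nth_append)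
  have P1: "E 0 c \<or> (\<exists>k\<in>{1..m}. \<not> E k c)" if "c < 2*n" for c
  proof -
    have "map (\<lambda>i. X i ! c) [0..<m+1] \<in> RLam m" using col that by (simp add: ff_def)
    hence "map (\<lambda>i. X i ! c) [0..<m+1] ! 0 \<or> (\<exists>k\<in>{1..m}. \<not> map (\<lambda>i. X i ! c) [0..<m+1] ! k)"
      unfolding RLam_def by blast
    thus ?thesis using colent that by (metis atLeastAtMost_iff le0)
  qed
  have P2: "E i c \<or> \<not> E 0 c \<or> \<not> E a c \<or> \<not> E b c" if "c < 2*n" "i\<in>{1..m}" "a\<in>{1..m}" "b\<in>{1..m}"
     "i \<noteq> a" "i \<noteq> b" "a \<noteq> b" for c i a b
  proof -
    have "map (\<lambda>i. X i ! c) [0..<m+1] \<in> RLam m" using col that by (simp add: ff_def)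
    hence "map (\<lambda>i. X i ! c) [0..<m+1] ! i \<or> \<not> map (\<lambda>i. X i ! c) [0..<m+1] ! 0
       \<or> \<not> map (\<lambda>i. X i ! c) [0..<m+1] ! a \<or> \<not> map (\<lambda>i. X i ! c) [0..<m+1] ! b"
      unfolding RLam_def using that by blast
    thus ?thesis using colent that by (metis atLeastAtMost_iff le0)
  qed
  have gl: "g k < n" if "k \<le> m" "\<not> Z k" for k using gk[OF that] by simp
  have C: "(\<not> Z 0 \<or> (\<exists>k\<in>{1..m}. Z k)) \<and>
         (\<forall>i\<in>{1..m}. \<forall>a\<in>{1..m}. \<forall>b\<in>{1..m}. i \<noteq> a \<and> i \<noteq> b \<and> a \<noteq> b \<longrightarrow> \<not> Z i \<or> Z 0 \<or> Z a \<or> Z b)"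
    by (rule comb[OF n3 m3 mn gl E_def P1 P2]) auto
  have rv: "map (\<lambda>i. the (snd (ff n) (X i))) [0..<m+1] ! k = (\<not> Z k)" if "k \<le> m" for k
  proof -
    have "the (snd (ff n) (X k)) = (\<not> Z k)"
    proof (cases "Z k")
      case True thus ?thesis by (simp add: ff_def Z_def)
    next
      case False
      with gk[OF that False] have "X k = vv n (g k)" "g k < n" by auto
      moreover have "vv n (g k) \<noteq> u0 n" using u0_ne_vv[of n "g k"] n3 \<open>g k < n\<close> by auto
      ultimately show ?thesis using False by (auto simp: ff_def Z_def)
    qed
    thus ?thesis using that by (simp del: upt_Suc add: nth_append)
  qed
  show "map (\<lambda>i. the (snd (ff n) (X i))) [0..<m+1] \<in> RLam m"
    unfolding RLam_def using C rv by (simp del: upt_Suc) (metis atLeastAtMost_iff le0)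
qed


theorem mainTheorem19:
  fixes n :: nat and M :: "nat set"
  assumes "n \<in> Nhat" and "M \<subseteq> Nhat - {n}"
  shows "\<not> (all_pfuns \<inter> (\<Inter>m\<in>M. pPol (m + 1) (RLam m)) \<subseteq> pPol (n + 1) (RLam n))"
proof
  assume h: "all_pfuns \<inter> (\<Inter>m\<in>M. pPol (m + 1) (RLam m)) \<subseteq> pPol (n + 1) (RLam n)"
  have n3: "n \<ge> 3" using assms(1) by (simp add: Nhat_def)
  have "ff n \<in> all_pfuns" using ff_pfun n3 by (simp add: all_pfuns_def)
  moreover have "ff n \<in> (\<Inter>m\<in>M. pPol (m + 1) (RLam m))"
  proof
    fix m assume "m \<in> M"
    hence "m \<ge> 3" "m \<noteq> n" using assms(2) by (auto simp: Nhat_def)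
    thus "ff n \<in> pPol (m + 1) (RLam m)" using ff_in n3 by simp
  qed
  ultimately have "ff n \<in> pPol (n + 1) (RLam n)" using h by blast
  thus False using ff_not n3 by simp
qed

end
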